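(* Let $G$ be a graph and $S\subseteq V(G)$. Let $H$ be a graph with $\partial(S)\subseteq V(H)$ and $V(H)\cap(V(G)\setminus S)=\emptyset$ such that $B_{G[S]}(\partial(S))=B_H(\partial(S))$, and let $G'$ be the graph obtained from $G$ by replacing $G[S]$ with $H$ (that is, $V(G')=(V(G)\setminus S)\cup V(H)$ and $E(G')$ consists of the edges of $G$ not having both endpoints in $S$ together with $E(H)$). Then for any proper $2$-coloring $K$ of $G$, the restriction $K|_{(V(G)\setminus S)\cup\partial(S)}$ can be extended to a proper $2$-coloring of $G'$, and for any proper $2$-coloring $K'$ of $G'$, the restriction $K'|_{(V(G)\setminus S)\cup\partial(S)}$ can be extended to a proper $2$-coloring of $G$.
   Context: $\partial(S)$ is the set of vertices of $S$ having at least one neighbor in $V(G)\setminus S$. For a graph $X$ and $T\subseteq V(X)$, $B_X(T)$ is the set of subsets $T'\subseteq T$ such that there is a bipartition of $X$ (proper $2$-coloring) with all of $T'$ in one part and all of $T\setminus T'$ in the other; $B_X(T)=\emptyset$ if $X$ is not bipartite. *)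

theory Defs
  imports Main
begin

definition graph :: "'a set \<Rightarrow> 'a set set \<Rightarrow> bool" where
  "graph V E \<longleftrightarrow> finite V \<and> (\<forall>e\<in>E. \<exists>u v. e = {u, v} \<and> u \<noteq> v \<and> u \<in> V \<and> v \<in> V)"

definition boundary :: "'a set \<Rightarrow> 'a set set \<Rightarrow> 'a set \<Rightarrow> 'a set" where
  "boundary V E S = {v \<in> S. \<exists>u \<in> V - S. {u, v} \<in> E}"

definition induced_edges :: "'a set set \<Rightarrow> 'a set \<Rightarrow> 'a set set" where
  "induced_edges E S = {e \<in> E. e \<subseteq> S}"

definition proper_2col :: "'a set \<Rightarrow> 'a set set \<Rightarrow> ('a \<Rightarrow> bool) \<Rightarrow> bool" where
  "proper_2col V E K \<longleftrightarrow> (\<forall>u v. {u, v} \<in> E \<longrightarrow> u \<noteq> v \<longrightarrow> K u \<noteq> K v)"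

definition bipartition :: "'a set \<Rightarrow> 'a set set \<Rightarrow> 'a set \<Rightarrow> 'a set \<Rightarrow> bool" where
  "bipartition V E A B \<longleftrightarrow> A \<union> B = V \<and> A \<inter> B = {} \<and>
     (\<forall>e\<in>E. \<not> e \<subseteq> A \<and> \<not> e \<subseteq> B)"

definition Bset :: "'a set \<Rightarrow> 'a set set \<Rightarrow> 'a set \<Rightarrow> 'a set set" where
  "Bset V E T = {T'. T' \<subseteq> T \<and> (\<exists>A B. bipartition V E A B \<and> T' \<subseteq> A \<and> T - T' \<subseteq> B)}"

end

theory Submission
  imports Defs
begin

lemma graph_edge: "graph V E \<Longrightarrow> {u,v} \<in> E \<Longrightarrow> u \<in> V \<and> v \<in> V"
proof -
    assume a: "graph V E" "{u,v} \<in> E"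
    then obtain a b where "{u,v} = {a,b}" "a \<in> V" "b \<in> V" unfolding graph_def by blast
    then show "u \<in> V \<and> v \<in> V" by (auto simp: doubleton_eq_iff)
qed

theorem lemma5p5:
  fixes V VH :: "'a set" and E EH :: "'a set set" and S :: "'a set"
  assumes "graph V E" and "S \<subseteq> V"
    and "graph VH EH"
    and "boundary V E S \<subseteq> VH"
    and "VH \<inter> (V - S) = {}"
    and "Bset S (induced_edges E S) (boundary V E S) = Bset VH EH (boundary V E S)"
  shows "(\<forall>K. proper_2col V E K \<longrightarrow>
            (\<exists>K'. proper_2col ((V - S) \<union> VH) ({e \<in> E. \<not> e \<subseteq> S} \<union> EH) K' \<and>
                  (\<forall>v \<in> (V - S) \<union> boundary V E S. K' v = K v)))
       \<and> (\<forall>K'. proper_2col ((V - S) \<union> VH) ({e \<in> E. \<not> e \<subseteq> S} \<union> EH) K' \<longrightarrow>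
            (\<exists>K. proper_2col V E K \<and>
                  (\<forall>v \<in> (V - S) \<union> boundary V E S. K v = K' v)))"
proof (intro conjI allI impI)
  let ?T = "boundary V E S"
  have EV: "\<And>u v. {u,v} \<in> E \<Longrightarrow> u \<in> V \<and> v \<in> V"
    using graph_edge[OF assms(1)] by blast
  have EHV: "\<And>u v. {u,v} \<in> EH \<Longrightarrow> u \<in> VH \<and> v \<in> VH"
    using graph_edge[OF assms(3)] by blast
  have TS: "?T \<subseteq> S" unfolding boundary_def by auto
  have bd: "\<And>u v. {u,v} \<in> E \<Longrightarrow> u \<notin> S \<Longrightarrow> v \<in> S \<Longrightarrow> v \<in> ?T"
    unfolding boundary_def using EV by auto
  {
    fix K assume K: "proper_2col V E K"
    define T' where "T' = {v \<in> ?T. K v}"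
    have "bipartition S (induced_edges E S) {v\<in>S. K v} {v\<in>S. \<not> K v}"
      unfolding bipartition_def induced_edges_def
    proof (intro conjI ballI)
      fix e assume e: "e \<in> {e \<in> E. e \<subseteq> S}"
      then obtain u v where uv: "e = {u,v}" "u \<noteq> v" using assms(1) unfolding graph_def by blast
      then have "K u \<noteq> K v" using K e unfolding proper_2col_def by auto
      then show "\<not> e \<subseteq> {v \<in> S. K v}" "\<not> e \<subseteq> {v \<in> S. \<not> K v}" using uv by auto
    qed auto
    moreover have "T' \<subseteq> {v\<in>S. K v}" "?T - T' \<subseteq> {v\<in>S. \<not> K v}" "T' \<subseteq> ?T"
      unfolding T'_def using TS by auto
    ultimately have "T' \<in> Bset S (induced_edges E S) ?T"
      unfolding Bset_def by (intro CollectI conjI exI) (assumption+)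
    then have "T' \<in> Bset VH EH ?T" using assms(6) by simp
    then obtain A B where AB: "bipartition VH EH A B" "T' \<subseteq> A" "?T - T' \<subseteq> B"
      unfolding Bset_def by blast
    define K' where "K' v = (if v \<in> VH then v \<in> A else K v)" for v
    have KT: "\<And>v. v \<in> ?T \<Longrightarrow> K' v = K v"
    proof -
      fix v assume v: "v \<in> ?T"
      have vH: "v \<in> VH" using v assms(4) by auto
      have d: "A \<inter> B = {}" using AB(1) unfolding bipartition_def by simp
      show "K' v = K v"
      proof (cases "K v")
        case True then have "v \<in> T'" using v unfolding T'_def by simp
        then show ?thesis using AB(2) vH True unfolding K'_def by auto
      next
        case False then have "v \<in> ?T - T'" using v unfolding T'_def by simp
        then have "v \<in> B" using AB(3) by blast
        then show ?thesis using d vH False unfolding K'_def by auto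
      qed
    qed
    have "proper_2col ((V - S) \<union> VH) ({e \<in> E. \<not> e \<subseteq> S} \<union> EH) K'"
      unfolding proper_2col_def
    proof (intro allI impI)
      fix u v assume e: "{u,v} \<in> {e \<in> E. \<not> e \<subseteq> S} \<union> EH" and uv: "u \<noteq> v"
      show "K' u \<noteq> K' v"
      proof (cases "{u,v} \<in> EH")
        case True
        then have "u \<in> VH" "v \<in> VH" using EHV by auto
        moreover have "\<not> {u,v} \<subseteq> A" "\<not> {u,v} \<subseteq> B" using AB(1) True unfolding bipartition_def by auto
        ultimately show ?thesis using AB(1) unfolding K'_def bipartition_def by auto
      next
        case False
        then have eE: "{u,v} \<in> E" "\<not> {u,v} \<subseteq> S" using e by auto
        have Kuv: "K u \<noteq> K v" using K eE uv unfolding proper_2col_def by auto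
        have "K' u = K u" and "K' v = K v"
        proof -
          show "K' u = K u"
          proof (cases "u \<in> S")
            case True then show ?thesis
              using bd[of v u] eE KT by (auto simp: insert_commute)
          next
            case False then show ?thesis using EV eE assms(5) unfolding K'_def by auto
          qed
          show "K' v = K v"
          proof (cases "v \<in> S")
            case True then show ?thesis
              using bd[of u v] eE KT by auto
          next
            case False then show ?thesis using EV eE assms(5) unfolding K'_def by auto
          qed
        qed
        then show ?thesis using Kuv by simp
      qed
    qed
    moreover have "\<forall>v \<in> (V - S) \<union> ?T. K' v = K v"
    proof
      fix v assume v: "v \<in> (V - S) \<union> ?T"
      show "K' v = K v"
      proof (cases "v \<in> ?T")
        case True then show ?thesis using KT by blast
      next
        case False then have "v \<notin> VH" using v assms(5) by auto
        then show ?thesis unfolding K'_def by simp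
      qed
    qed
    ultimately show "\<exists>K'. proper_2col ((V - S) \<union> VH) ({e \<in> E. \<not> e \<subseteq> S} \<union> EH) K' \<and>
                  (\<forall>v \<in> (V - S) \<union> ?T. K' v = K v)" by blast
  }
  {
    fix K' assume K': "proper_2col ((V - S) \<union> VH) ({e \<in> E. \<not> e \<subseteq> S} \<union> EH) K'"
    define T' where "T' = {v \<in> ?T. K' v}"
    have "bipartition VH EH {v\<in>VH. K' v} {v\<in>VH. \<not> K' v}"
      unfolding bipartition_def
    proof (intro conjI ballI)
      fix e assume e: "e \<in> EH"
      then obtain u v where uv: "e = {u,v}" "u \<noteq> v" using assms(3) unfolding graph_def by blast
      then have "K' u \<noteq> K' v" using K' e unfolding proper_2col_def by auto
      then show "\<not> e \<subseteq> {v \<in> VH. K' v}" "\<not> e \<subseteq> {v \<in> VH. \<not> K' v}" using uv by auto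
    qed auto
    moreover have "T' \<subseteq> {v\<in>VH. K' v}" "?T - T' \<subseteq> {v\<in>VH. \<not> K' v}" "T' \<subseteq> ?T"
      unfolding T'_def using assms(4) by auto
    ultimately have "T' \<in> Bset VH EH ?T"
      unfolding Bset_def by (intro CollectI conjI exI) (assumption+)
    then have "T' \<in> Bset S (induced_edges E S) ?T" using assms(6) by simp
    then obtain A B where AB: "bipartition S (induced_edges E S) A B" "T' \<subseteq> A" "?T - T' \<subseteq> B"
      unfolding Bset_def by blast
    define K where "K v = (if v \<in> S then v \<in> A else K' v)" for v
    have KT: "\<And>v. v \<in> ?T \<Longrightarrow> K v = K' v"
    proof -
      fix v assume v: "v \<in> ?T"
      have vH: "v \<in> S" using v TS by auto
      have d: "A \<inter> B = {}" using AB(1) unfolding bipartition_def by simp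
      show "K v = K' v"
      proof (cases "K' v")
        case True then have "v \<in> T'" using v unfolding T'_def by simp
        then show ?thesis using AB(2) vH True unfolding K_def by auto
      next
        case False then have "v \<in> ?T - T'" using v unfolding T'_def by simp
        then have "v \<in> B" using AB(3) by blast
        then show ?thesis using d vH False unfolding K_def by auto
      qed
    qed
    have "proper_2col V E K"
      unfolding proper_2col_def
    proof (intro allI impI)
      fix u v assume eE: "{u,v} \<in> E" and uv: "u \<noteq> v"
      show "K u \<noteq> K v"
      proof (cases "{u,v} \<subseteq> S")
        case True
        then have "{u,v} \<in> induced_edges E S" using eE unfolding induced_edges_def by auto
        then have "\<not> {u,v} \<subseteq> A" "\<not> {u,v} \<subseteq> B" using AB(1) unfolding bipartition_def by auto
        then show ?thesis using AB(1) True unfolding K_def bipartition_def by auto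
      next
        case False
        have Kuv: "K' u \<noteq> K' v" using K' eE False uv unfolding proper_2col_def by auto
        have "K u = K' u" and "K v = K' v"
        proof -
          show "K u = K' u"
          proof (cases "u \<in> S")
            case True then show ?thesis
              using bd[of v u] eE KT False by (auto simp: insert_commute)
          next
            case False then show ?thesis unfolding K_def by auto
          qed
          show "K v = K' v"
          proof (cases "v \<in> S")
            case True then show ?thesis
              using bd[of u v] eE KT False by auto
          next
            case False then show ?thesis unfolding K_def by auto
          qed
        qed
        then show ?thesis using Kuv by simp
      qed
    qed
    moreover have "\<forall>v \<in> (V - S) \<union> ?T. K v = K' v"
    proof
      fix v assume v: "v \<in> (V - S) \<union> ?T"
      show "K v = K' v"
      proof (cases "v \<in> ?T")
        case True then show ?thesis using KT by blast
      next
        case False then have "v \<notin> S" using v by auto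
        then show ?thesis unfolding K_def by simp
      qed
    qed
    ultimately show "\<exists>K. proper_2col V E K \<and> (\<forall>v \<in> (V - S) \<union> ?T. K v = K' v)" by blast
  }
qed

end
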